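(* Let $\mathbb J=\mathbb N\times(\mathbb N\cup\{\infty\})$ ordered by $(j,k)\le(m,n)$ iff either ($j=m$ and $k\le n$) or ($n=\infty$ and $k\le m$), and let $X=(\mathbb J,\sigma(\mathbb J))$ carry the Scott topology. Then $X$ is a $d$-space, $Q(X)=Q_s(X)$, and $X$ is neither well-filtered nor $s$-well-filtered. In particular, a $d$-space need not be $s$-well-filtered.
   Context: A subset $U$ of a poset is Scott open if it is an upper set and for every directed $D$ with existing supremum, $\bigvee D\in U$ implies $D\cap U\neq\emptyset$. A $T_0$ space is a $d$-space if it is a dcpo in its specialization order and every open set is Scott open. $Q(X)$: nonempty compact saturated sets; $Q_s(X)$: nonempty strongly compact saturated sets, where $A$ is strongly compact if for every open $U\supseteq A$ there is finite $F$ with $A\subseteq\uparrow F\subseteq U$. A family is filtered if nonempty and any two members contain a third. $X$ is well-filtered (resp. $s$-well-filtered) if for every open $U$ and filtered $\mathcal K\subseteq Q(X)$ (resp. $\subseteq Q_s(X)$), $\bigcap\mathcal K\subseteq U$ implies $K\subseteq U$ for some $K\in\mathcal K$. *)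

theory Defs
  imports "HOL-Analysis.Analysis" "HOL-Library.Extended_Nat"
begin

definition directed_in :: "'a set \<Rightarrow> ('a \<Rightarrow> 'a \<Rightarrow> bool) \<Rightarrow> 'a set \<Rightarrow> bool" where
  "directed_in P le D \<longleftrightarrow> D \<subseteq> P \<and> D \<noteq> {} \<and> (\<forall>x\<in>D. \<forall>y\<in>D. \<exists>z\<in>D. le x z \<and> le y z)"

definition is_lub_in :: "'a set \<Rightarrow> ('a \<Rightarrow> 'a \<Rightarrow> bool) \<Rightarrow> 'a set \<Rightarrow> 'a \<Rightarrow> bool" where
  "is_lub_in P le D s \<longleftrightarrow> s \<in> P \<and> (\<forall>x\<in>D. le x s) \<and> (\<forall>u\<in>P. (\<forall>x\<in>D. le x u) \<longrightarrow> le s u)"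

definition scott_open :: "'a set \<Rightarrow> ('a \<Rightarrow> 'a \<Rightarrow> bool) \<Rightarrow> 'a set \<Rightarrow> bool" where
  "scott_open P le U \<longleftrightarrow> U \<subseteq> P \<and> (\<forall>x\<in>U. \<forall>y\<in>P. le x y \<longrightarrow> y \<in> U) \<and>
     (\<forall>D s. directed_in P le D \<and> is_lub_in P le D s \<and> s \<in> U \<longrightarrow> D \<inter> U \<noteq> {})"

definition dcpo_in :: "'a set \<Rightarrow> ('a \<Rightarrow> 'a \<Rightarrow> bool) \<Rightarrow> bool" where
  "dcpo_in P le \<longleftrightarrow> (\<forall>D. directed_in P le D \<longrightarrow> (\<exists>s. is_lub_in P le D s))"

definition scott_topology :: "'a set \<Rightarrow> ('a \<Rightarrow> 'a \<Rightarrow> bool) \<Rightarrow> 'a topology" where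
  "scott_topology P le = topology (scott_open P le)"

definition spec_le :: "'a topology \<Rightarrow> 'a \<Rightarrow> 'a \<Rightarrow> bool" where
  "spec_le X x y \<longleftrightarrow> x \<in> X closure_of {y}"

definition T0 :: "'a topology \<Rightarrow> bool" where
  "T0 X \<longleftrightarrow> (\<forall>x\<in>topspace X. \<forall>y\<in>topspace X. x \<noteq> y \<longrightarrow>
              (\<exists>U. openin X U \<and> \<not> (x \<in> U \<longleftrightarrow> y \<in> U)))"

definition d_space :: "'a topology \<Rightarrow> bool" where
  "d_space X \<longleftrightarrow> T0 X \<and> dcpo_in (topspace X) (spec_le X) \<and>
     (\<forall>U. openin X U \<longrightarrow> scott_open (topspace X) (spec_le X) U)"

definition saturated :: "'a topology \<Rightarrow> 'a set \<Rightarrow> bool" where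
  "saturated X A \<longleftrightarrow> A \<subseteq> topspace X \<and> A = \<Inter>{U. openin X U \<and> A \<subseteq> U}"

definition upclosure :: "'a topology \<Rightarrow> 'a set \<Rightarrow> 'a set" where
  "upclosure X F = {x \<in> topspace X. \<exists>f\<in>F. spec_le X f x}"

definition strongly_compact :: "'a topology \<Rightarrow> 'a set \<Rightarrow> bool" where
  "strongly_compact X A \<longleftrightarrow> A \<subseteq> topspace X \<and>
     (\<forall>U. openin X U \<and> A \<subseteq> U \<longrightarrow>
        (\<exists>F. finite F \<and> F \<subseteq> topspace X \<and> A \<subseteq> upclosure X F \<and> upclosure X F \<subseteq> U))"

definition Qset :: "'a topology \<Rightarrow> 'a set set" where
  "Qset X = {A. A \<noteq> {} \<and> compactin X A \<and> saturated X A}"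

definition Qs_set :: "'a topology \<Rightarrow> 'a set set" where
  "Qs_set X = {A. A \<noteq> {} \<and> strongly_compact X A \<and> saturated X A}"

definition filtered_family :: "'a set set \<Rightarrow> bool" where
  "filtered_family K \<longleftrightarrow> K \<noteq> {} \<and> (\<forall>A\<in>K. \<forall>B\<in>K. \<exists>C\<in>K. C \<subseteq> A \<inter> B)"

definition well_filtered :: "'a topology \<Rightarrow> bool" where
  "well_filtered X \<longleftrightarrow> (\<forall>U K. openin X U \<and> K \<subseteq> Qset X \<and> filtered_family K \<and> \<Inter>K \<subseteq> U
       \<longrightarrow> (\<exists>A\<in>K. A \<subseteq> U))"

definition s_well_filtered :: "'a topology \<Rightarrow> bool" where
  "s_well_filtered X \<longleftrightarrow> (\<forall>U K. openin X U \<and> K \<subseteq> Qs_set X \<and> filtered_family K \<and> \<Inter>K \<subseteq> U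
       \<longrightarrow> (\<exists>A\<in>K. A \<subseteq> U))"

definition Jle :: "nat \<times> enat \<Rightarrow> nat \<times> enat \<Rightarrow> bool" where
  "Jle p q \<longleftrightarrow> (case p of (j, k) \<Rightarrow> case q of (m, n) \<Rightarrow>
      (j = m \<and> k \<le> n) \<or> (n = \<infinity> \<and> k \<le> enat m))"

end

theory Submission imports Defs begin

lemma Jle_iff: "Jle (j,k) (m,n) \<longleftrightarrow> (j = m \<and> k \<le> n) \<or> (n = \<infinity> \<and> k \<le> enat m)"
  by (simp add: Jle_def)

lemma Jle_refl: "Jle x x"
  by (cases x) (simp add: Jle_iff)

lemma Jle_trans: "Jle x y \<Longrightarrow> Jle y z \<Longrightarrow> Jle x z"
  apply (cases x; cases y; cases z)
  by (auto simp: Jle_iff)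

lemma Jle_antisym: "Jle x y \<Longrightarrow> Jle y x \<Longrightarrow> x = y"
  by (cases x; cases y) (auto simp: Jle_iff)

lemma scott_istopology: "istopology (scott_open P le)"
  unfolding istopology_def
proof (intro conjI allI impI)
  fix S T assume S: "scott_open P le S" and T: "scott_open P le T"
  show "scott_open P le (S \<inter> T)"
    unfolding scott_open_def
  proof (intro conjI allI impI)
    show "S \<inter> T \<subseteq> P" using S by (auto simp: scott_open_def)
    show "\<forall>x\<in>S \<inter> T. \<forall>y\<in>P. le x y \<longrightarrow> y \<in> S \<inter> T" using S T by (auto simp: scott_open_def)
    fix D s assume a: "directed_in P le D \<and> is_lub_in P le D s \<and> s \<in> S \<inter> T"
    then obtain x y where "x \<in> D \<inter> S" "y \<in> D \<inter> T" using S T unfolding scott_open_def by blast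
    then obtain z where "z \<in> D" "le x z" "le y z" using a unfolding directed_in_def by blast
    moreover have "z \<in> P" using a \<open>z \<in> D\<close> unfolding directed_in_def by blast
    ultimately have "z \<in> S \<inter> T" using S T \<open>x \<in> D \<inter> S\<close> \<open>y \<in> D \<inter> T\<close> unfolding scott_open_def by blast
    then show "D \<inter> (S \<inter> T) \<noteq> {}" using \<open>z \<in> D\<close> by blast
  qed
next
  fix K assume K: "\<forall>A\<in>K. scott_open P le A"
  show "scott_open P le (\<Union>K)"
    unfolding scott_open_def
  proof (intro conjI allI impI)
    show "\<Union>K \<subseteq> P" using K by (auto simp: scott_open_def)
    show "\<forall>x\<in>\<Union>K. \<forall>y\<in>P. le x y \<longrightarrow> y \<in> \<Union>K" using K by (auto simp: scott_open_def)
    fix D s assume a: "directed_in P le D \<and> is_lub_in P le D s \<and> s \<in> \<Union>K"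
    then obtain A where "A \<in> K" "s \<in> A" by blast
    then have "D \<inter> A \<noteq> {}" using K a unfolding scott_open_def by blast
    then show "D \<inter> \<Union>K \<noteq> {}" using \<open>A \<in> K\<close> by blast
  qed
qed

abbreviation "XJ \<equiv> scott_topology UNIV Jle"

lemma openin_XJ: "openin XJ U \<longleftrightarrow> scott_open UNIV Jle U"
  unfolding scott_topology_def by (simp only: topology_inverse'[OF scott_istopology])

lemma scott_open_UNIV: "scott_open UNIV Jle UNIV"
  by (auto simp: scott_open_def directed_in_def)

lemma topspace_XJ: "topspace XJ = UNIV"
  unfolding topspace_def openin_XJ using scott_open_UNIV by blast

lemma open_down_compl: "scott_open UNIV Jle (- {z. Jle z y})"
  unfolding scott_open_def
proof (intro conjI allI impI ballI)
  fix x z assume "x \<in> - {z. Jle z y}" "Jle x z"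
  then show "z \<in> - {z. Jle z y}" using Jle_trans by blast
next
  fix D s assume a: "directed_in UNIV Jle D \<and> is_lub_in UNIV Jle D s \<and> s \<in> - {z. Jle z y}"
  show "D \<inter> - {z. Jle z y} \<noteq> {}"
  proof
    assume "D \<inter> - {z. Jle z y} = {}"
    then have "\<forall>x\<in>D. Jle x y" by blast
    then have "Jle s y" using a unfolding is_lub_in_def by blast
    then show False using a by blast
  qed
qed auto

lemma open_upper: "openin XJ U \<Longrightarrow> x \<in> U \<Longrightarrow> Jle x y \<Longrightarrow> y \<in> U"
  unfolding openin_XJ scott_open_def by blast

lemma spec_le_XJ: "spec_le XJ x y \<longleftrightarrow> Jle x y"
proof
  assume "spec_le XJ x y"
  then have h: "\<And>T. x \<in> T \<Longrightarrow> openin XJ T \<Longrightarrow> y \<in> T"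
    unfolding spec_le_def closure_of_def by simp
  have o: "openin XJ (- {z. Jle z y})" using open_down_compl openin_XJ by simp
  show "Jle x y"
  proof (rule ccontr)
    assume "\<not> Jle x y"
    then have "x \<in> - {z. Jle z y}" by simp
    then have "y \<in> - {z. Jle z y}" by (rule h[OF _ o])
    then show False using Jle_refl[of y] by simp
  qed
next
  assume "Jle x y"
  have "\<forall>T. x \<in> T \<and> openin XJ T \<longrightarrow> (\<exists>z\<in>{y}. z \<in> T)"
    using open_upper \<open>Jle x y\<close> by blast
  then show "spec_le XJ x y"
    unfolding spec_le_def closure_of_def topspace_XJ by simp
qed

lemma spec_le_XJ': "spec_le XJ = Jle"
  by (intro ext) (rule spec_le_XJ)

lemma Jle_inf_max: "Jle (p,\<infinity>) z \<Longrightarrow> z = (p,\<infinity>)"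
  by (cases z) (auto simp: Jle_iff)

lemma Jle_fin: "Jle x (m, enat n) \<Longrightarrow> fst x = m \<and> snd x \<le> enat n"
  by (cases x) (auto simp: Jle_iff)

lemma lub_of_max: "s \<in> D \<Longrightarrow> \<forall>x\<in>D. Jle x s \<Longrightarrow> is_lub_in UNIV Jle D s"
  unfolding is_lub_in_def by blast

lemma dir_inf: assumes "directed_in UNIV Jle D" "x \<in> D" "snd x = \<infinity>"
  shows "is_lub_in UNIV Jle D x"
proof (rule lub_of_max[OF assms(2)], intro ballI)
  fix y assume "y \<in> D"
  then obtain z where "z \<in> D" "Jle x z" "Jle y z" using assms(1,2) unfolding directed_in_def by blast
  obtain p where xp: "x = (p, \<infinity>)" using assms(3) by (cases x) auto
  have "Jle (p, \<infinity>) z" using \<open>Jle x z\<close> xp by simp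
  then have "z = (p, \<infinity>)" by (rule Jle_inf_max)
  then have "z = x" using xp by simp
  then show "Jle y x" using \<open>Jle y z\<close> by simp
qed

lemma dir_col: assumes "directed_in UNIV Jle D" "\<forall>x\<in>D. snd x \<noteq> \<infinity>" "x \<in> D" "y \<in> D"
  shows "fst x = fst y"
proof -
  obtain z where "z \<in> D" "Jle x z" "Jle y z" using assms unfolding directed_in_def by blast
  have "snd z \<noteq> \<infinity>" using assms(2) \<open>z \<in> D\<close> by blast
  then obtain n where "snd z = enat n" by (cases "snd z") auto
  then obtain m where z: "z = (m, enat n)" by (cases z) simp
  have "fst x = m" using Jle_fin[of x m n] \<open>Jle x z\<close> z by simp
  moreover have "fst y = m" using Jle_fin[of y m n] \<open>Jle y z\<close> z by simp
  ultimately show ?thesis by simp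
qed

lemma dcpo_J: "dcpo_in UNIV Jle"
  unfolding dcpo_in_def
proof (intro allI impI)
  fix D assume dir: "directed_in UNIV Jle D"
  show "\<exists>s. is_lub_in UNIV Jle D s"
  proof (cases "\<exists>x\<in>D. snd x = \<infinity>")
    case True then show ?thesis using dir_inf[OF dir] by blast
  next
    case False
    have fin: "\<forall>x\<in>D. snd x \<noteq> \<infinity>"
    proof
      fix x assume "x \<in> D"
      show "snd x \<noteq> \<infinity>"
      proof
        assume "snd x = \<infinity>"
        then show False using False \<open>x \<in> D\<close> by blast
      qed
    qed
    obtain x0 where "x0 \<in> D" using dir unfolding directed_in_def by blast
    define j where "j = fst x0"
    define S where "S = {n. (j, enat n) \<in> D}"
    have Dform: "\<forall>x\<in>D. \<exists>n\<in>S. x = (j, enat n)"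
    proof
      fix x assume "x \<in> D"
      then have "fst x = j" using dir_col[OF dir fin \<open>x \<in> D\<close> \<open>x0 \<in> D\<close>] j_def by simp
      moreover have "snd x \<noteq> \<infinity>" using fin \<open>x \<in> D\<close> by blast
      then obtain n where "snd x = enat n" by (cases "snd x") auto
      ultimately have "x = (j, enat n)" by (cases x) simp
      then show "\<exists>n\<in>S. x = (j, enat n)" using \<open>x \<in> D\<close> S_def by blast
    qed
    have "S \<noteq> {}" using Dform \<open>x0 \<in> D\<close> by blast
    show ?thesis
    proof (cases "finite S")
      case True
      have "(j, enat (Max S)) \<in> D" using Max_in[OF True \<open>S \<noteq> {}\<close>] S_def by blast
      moreover have "\<forall>x\<in>D. Jle x (j, enat (Max S))"
      proof
        fix x assume "x \<in> D"
        then obtain n where "n \<in> S" "x = (j, enat n)" using Dform by blast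
        then show "Jle x (j, enat (Max S))" using Max_ge[OF True \<open>n \<in> S\<close>] by (simp add: Jle_iff)
      qed
      ultimately show ?thesis using lub_of_max by blast
    next
      case False
      have unb: "\<exists>k\<in>S. k > N" for N
        using False infinite_nat_iff_unbounded by blast
      have "is_lub_in UNIV Jle D (j, \<infinity>)"
        unfolding is_lub_in_def
      proof (intro conjI ballI impI)
        fix x assume "x \<in> D" then show "Jle x (j, \<infinity>)" using Dform by (auto simp: Jle_iff)
      next
        fix u :: "nat \<times> enat" assume ub: "\<forall>x\<in>D. Jle x u"
        obtain q n where u: "u = (q, n)" by (cases u)
        have n: "n = \<infinity>"
        proof (rule ccontr)
          assume "n \<noteq> \<infinity>"
          then obtain m where "n = enat m" by (cases n) auto
          obtain k where "k \<in> S" "k > q + m" using unb by blast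
          then have "Jle (j, enat k) (q, enat m)" using ub u \<open>n = enat m\<close> S_def by blast
          then show False using \<open>k > q + m\<close> by (auto simp: Jle_iff)
        qed
        obtain k where "k \<in> S" "k > q" using unb by blast
        then have "Jle (j, enat k) (q, \<infinity>)" using ub u n S_def by blast
        then have "q = j" using \<open>k > q\<close> by (auto simp: Jle_iff)
        then show "Jle (j, \<infinity>) u" using u n by (simp add: Jle_iff)
      qed simp
      then show ?thesis by blast
    qed
  qed
qed

lemma T0_XJ: "T0 XJ"
  unfolding T0_def
proof (intro ballI impI)
  fix x y :: "nat \<times> enat" assume "x \<noteq> y"
  then have "\<not> Jle x y \<or> \<not> Jle y x" using Jle_antisym by blast
  then show "\<exists>U. openin XJ U \<and> \<not> (x \<in> U \<longleftrightarrow> y \<in> U)"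
  proof
    assume "\<not> Jle x y"
    then show ?thesis using open_down_compl[of y] openin_XJ Jle_refl[of y] by blast
  next
    assume "\<not> Jle y x"
    then show ?thesis using open_down_compl[of x] openin_XJ Jle_refl[of x] by blast
  qed
qed

lemma dspace_XJ: "d_space XJ"
  unfolding d_space_def topspace_XJ spec_le_XJ' using T0_XJ dcpo_J openin_XJ by blast

lemma open_f: "scott_open UNIV Jle {x. enat (f (fst x)) \<le> snd x}"
  unfolding scott_open_def
proof (intro conjI allI impI ballI)
  fix x y assume x: "x \<in> {x. enat (f (fst x)) \<le> snd x}" and "Jle x y"
  obtain j k where xx: "x = (j,k)" by (cases x)
  obtain m n where yy: "y = (m,n)" by (cases y)
  show "y \<in> {x. enat (f (fst x)) \<le> snd x}"
    using x \<open>Jle x y\<close> xx yy by (auto simp: Jle_iff)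
next
  fix D s assume a: "directed_in UNIV Jle D \<and> is_lub_in UNIV Jle D s \<and> s \<in> {x. enat (f (fst x)) \<le> snd x}"
  then have dir: "directed_in UNIV Jle D" by blast
  show "D \<inter> {x. enat (f (fst x)) \<le> snd x} \<noteq> {}"
  proof
    assume "D \<inter> {x. enat (f (fst x)) \<le> snd x} = {}"
    then have lt: "\<forall>x\<in>D. snd x < enat (f (fst x))" by auto
    have fin: "\<forall>x\<in>D. snd x \<noteq> \<infinity>"
    proof
      fix x assume "x \<in> D"
      then have "snd x < enat (f (fst x))" using lt by blast
      then show "snd x \<noteq> \<infinity>" by (cases "snd x") auto
    qed
    obtain x0 where "x0 \<in> D" using dir unfolding directed_in_def by blast
    define j where "j = fst x0"
    have col: "\<forall>x\<in>D. fst x = j" using dir_col[OF dir fin _ \<open>x0 \<in> D\<close>] j_def by blast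
    have "snd x0 < enat (f j)" using lt \<open>x0 \<in> D\<close> j_def by blast
    then have "f j > 0" by (cases "snd x0") auto
    have "\<forall>x\<in>D. Jle x (j, enat (f j - 1))"
    proof
      fix x assume "x \<in> D"
      then have "snd x < enat (f j)" "fst x = j" using lt col by auto
      then have "snd x \<le> enat (f j - 1)" using \<open>f j > 0\<close>
        by (cases "snd x") auto
      then show "Jle x (j, enat (f j - 1))" using \<open>fst x = j\<close> by (cases x) (simp add: Jle_iff)
    qed
    then have "Jle s (j, enat (f j - 1))" using a unfolding is_lub_in_def by blast
    then have "fst s = j" "snd s \<le> enat (f j - 1)" using Jle_fin by blast+
    moreover have "enat (f (fst s)) \<le> snd s" using a by blast
    ultimately show False using \<open>f j > 0\<close> by (cases "snd s") auto
  qed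
qed auto

lemma lub_col: assumes "infinite S"
  shows "is_lub_in UNIV Jle ((\<lambda>k. (j, enat k)) ` S) (j, \<infinity>)"
  unfolding is_lub_in_def
proof (intro conjI ballI impI)
  have unb: "\<exists>k\<in>S. k > N" for N
    using assms infinite_nat_iff_unbounded by blast
  fix x assume "x \<in> (\<lambda>k. (j, enat k)) ` S" then show "Jle x (j, \<infinity>)" by (auto simp: Jle_iff)
next
  have unb: "\<exists>k\<in>S. k > N" for N
    using assms infinite_nat_iff_unbounded by blast
  fix u :: "nat \<times> enat" assume ub: "\<forall>x\<in>(\<lambda>k. (j, enat k)) ` S. Jle x u"
  obtain q n where u: "u = (q, n)" by (cases u)
  have n: "n = \<infinity>"
  proof (rule ccontr)
    assume "n \<noteq> \<infinity>"
    then obtain m where "n = enat m" by (cases n) auto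
    obtain k where "k \<in> S" "k > q + m" using unb by blast
    then have "Jle (j, enat k) (q, enat m)" using ub u \<open>n = enat m\<close> by blast
    then show False using \<open>k > q + m\<close> by (auto simp: Jle_iff)
  qed
  obtain k where "k \<in> S" "k > q" using unb by blast
  then have "Jle (j, enat k) (q, \<infinity>)" using ub u n by blast
  then have "q = j" using \<open>k > q\<close> by (auto simp: Jle_iff)
  then show "Jle (j, \<infinity>) u" using u n by (simp add: Jle_iff)
qed simp

lemma ray: assumes "openin XJ U" "(q, \<infinity>) \<in> U" shows "\<exists>g. (q, enat g) \<in> U"
proof -
  let ?D = "(\<lambda>k. (q, enat k)) ` (UNIV :: nat set)"
  have dir: "directed_in UNIV Jle ?D"
    unfolding directed_in_def
  proof (intro conjI ballI)
    fix x y assume "x \<in> ?D" "y \<in> ?D"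
    then obtain a b where "x = (q, enat a)" "y = (q, enat b)" by blast
    then show "\<exists>z\<in>?D. Jle x z \<and> Jle y z"
      by (intro bexI[of _ "(q, enat (max a b))"]) (auto simp: Jle_iff)
  qed auto
  have "is_lub_in UNIV Jle ?D (q, \<infinity>)" using lub_col[of "UNIV :: nat set" q] by simp
  then have "?D \<inter> U \<noteq> {}" using assms dir unfolding openin_XJ scott_open_def by blast
  then show ?thesis by blast
qed

lemma saturated_iff: "saturated XJ A \<longleftrightarrow> (\<forall>x\<in>A. \<forall>y. Jle x y \<longrightarrow> y \<in> A)"
proof
  assume s: "saturated XJ A"
  show "\<forall>x\<in>A. \<forall>y. Jle x y \<longrightarrow> y \<in> A"
  proof (intro ballI allI impI)
    fix x y assume "x \<in> A" "Jle x y"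
    then have "y \<in> \<Inter>{U. openin XJ U \<and> A \<subseteq> U}" using open_upper by blast
    then show "y \<in> A" using s unfolding saturated_def by blast
  qed
next
  assume up: "\<forall>x\<in>A. \<forall>y. Jle x y \<longrightarrow> y \<in> A"
  have "\<Inter>{U. openin XJ U \<and> A \<subseteq> U} \<subseteq> A"
  proof
    fix x assume x: "x \<in> \<Inter>{U. openin XJ U \<and> A \<subseteq> U}"
    show "x \<in> A"
    proof (rule ccontr)
      assume "x \<notin> A"
      then have "A \<subseteq> - {z. Jle z x}" using up by blast
      moreover have "openin XJ (- {z. Jle z x})" using open_down_compl openin_XJ by blast
      ultimately have "x \<in> - {z. Jle z x}" using x by blast
      then show False using Jle_refl by blast
    qed
  qed
  then show "saturated XJ A" unfolding saturated_def topspace_XJ by blast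
qed

lemma upclosure_XJ: "upclosure XJ F = {x. \<exists>f\<in>F. Jle f x}"
  unfolding upclosure_def topspace_XJ spec_le_XJ' by simp

lemma Qs_sub_Q: assumes "A \<in> Qs_set XJ" shows "A \<in> Qset XJ"
proof -
  have sc: "strongly_compact XJ A" and ne: "A \<noteq> {}" and sat: "saturated XJ A"
    using assms unfolding Qs_set_def by auto
  have "compactin XJ A"
    unfolding compactin_def topspace_XJ
  proof (intro conjI allI impI)
    fix \<U> assume a: "(\<forall>U\<in>\<U>. openin XJ U) \<and> A \<subseteq> \<Union>\<U>"
    then have "openin XJ (\<Union>\<U>)" by blast
    then obtain F where F: "finite F" "A \<subseteq> upclosure XJ F" "upclosure XJ F \<subseteq> \<Union>\<U>"
      using sc a unfolding strongly_compact_def by blast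
    have "\<forall>f\<in>F. \<exists>V\<in>\<U>. f \<in> V"
      using F(3) Jle_refl unfolding upclosure_XJ by blast
    then have "\<forall>f\<in>F. \<exists>W. W \<in> \<U> \<and> f \<in> W" by blast
    then obtain V where V: "\<forall>f\<in>F. V f \<in> \<U> \<and> f \<in> V f" using bchoice[of F "\<lambda>f W. W \<in> \<U> \<and> f \<in> W"] by blast
    have "A \<subseteq> \<Union>(V ` F)"
    proof
      fix x assume "x \<in> A"
      then obtain f where "f \<in> F" "Jle f x" using F(2) unfolding upclosure_XJ by blast
      then have "x \<in> V f" using V a open_upper by blast
      then show "x \<in> \<Union>(V ` F)" using \<open>f \<in> F\<close> by blast
    qed
    then show "\<exists>\<F>. finite \<F> \<and> \<F> \<subseteq> \<U> \<and> A \<subseteq> \<Union>\<F>"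
      using F(1) V by (intro exI[of _ "V ` F"]) auto
  qed simp
  then show ?thesis using ne sat unfolding Qset_def by blast
qed

lemma cols_finite: assumes "compactin XJ A" shows "finite {j. \<exists>k. (j, enat k) \<in> A}"
proof (rule ccontr)
  define C where "C = {j. \<exists>k. (j, enat k) \<in> A}"
  assume "infinite {j. \<exists>k. (j, enat k) \<in> A}"
  then have inf: "infinite C" using C_def by simp
  define h where "h j = (LEAST k. (j, enat k) \<in> A)" for j
  have hin: "(j, enat (h j)) \<in> A" if "j \<in> C" for j
    using that unfolding C_def h_def by (auto intro: LeastI)
  have hle: "h j \<le> k" if "(j, enat k) \<in> A" for j k
    using that unfolding h_def by (rule Least_le)
  define f where "f m j = (if j \<le> m then h j else Suc (h j))" for m j
  define Uf where "Uf m = {x. enat (f m (fst x)) \<le> snd x}" for m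
  have op: "\<forall>U\<in>range Uf. openin XJ U" unfolding Uf_def openin_XJ using open_f by blast
  have cov: "A \<subseteq> \<Union>(range Uf)"
  proof
    fix z assume "z \<in> A"
    obtain j l where z: "z = (j, l)" by (cases z)
    show "z \<in> \<Union>(range Uf)"
    proof (cases l)
      case (enat k)
      then have "j \<in> C" "h j \<le> k" using \<open>z \<in> A\<close> z hle C_def by auto
      then have "z \<in> Uf j" using z enat unfolding Uf_def f_def by simp
      then show ?thesis by blast
    next
      case infinity
      then have "z \<in> Uf 0" using z unfolding Uf_def by simp
      then show ?thesis by blast
    qed
  qed
  obtain \<F> where F: "finite \<F>" "\<F> \<subseteq> range Uf" "A \<subseteq> \<Union>\<F>"
  proof -
    have "\<forall>\<U>. (\<forall>U\<in>\<U>. openin XJ U) \<and> A \<subseteq> \<Union>\<U> \<longrightarrow> (\<exists>\<F>. finite \<F> \<and> \<F> \<subseteq> \<U> \<and> A \<subseteq> \<Union>\<F>)"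
      using assms unfolding compactin_def by blast
    then have "\<exists>\<F>. finite \<F> \<and> \<F> \<subseteq> range Uf \<and> A \<subseteq> \<Union>\<F>" using op cov by blast
    then show ?thesis using that by blast
  qed
  obtain M where M: "finite M" "\<F> = Uf ` M" using F(1,2) by (meson finite_subset_image)
  obtain N where N: "\<forall>m\<in>M. m \<le> N" using M(1) finite_nat_set_iff_bounded_le by blast
  obtain j where "j \<in> C" "j > N" using inf infinite_nat_iff_unbounded by blast
  then have "(j, enat (h j)) \<in> A" using hin by blast
  then obtain m where "m \<in> M" "(j, enat (h j)) \<in> Uf m" using F(3) M(2) by blast
  then have "m \<le> N" using N by blast
  then have "m < j" using \<open>j > N\<close> by linarith
  then show False using \<open>(j, enat (h j)) \<in> Uf m\<close> unfolding Uf_def f_def by simp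
qed

lemma Q_sub_Qs: assumes "A \<in> Qset XJ" shows "A \<in> Qs_set XJ"
proof -
  have cp: "compactin XJ A" and ne: "A \<noteq> {}" and sat: "saturated XJ A"
    using assms unfolding Qset_def by auto
  have up: "\<forall>x\<in>A. \<forall>y. Jle x y \<longrightarrow> y \<in> A" using sat saturated_iff by blast
  define C where "C = {j. \<exists>k. (j, enat k) \<in> A}"
  have finC: "finite C" using cols_finite[OF cp] C_def by simp
  define h where "h j = (LEAST k. (j, enat k) \<in> A)" for j
  have hin: "(j, enat (h j)) \<in> A" if "j \<in> C" for j
    using that unfolding C_def h_def by (auto intro: LeastI)
  have hle: "h j \<le> k" if "(j, enat k) \<in> A" for j k
    using that unfolding h_def by (rule Least_le)
  have "strongly_compact XJ A"
    unfolding strongly_compact_def topspace_XJ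
  proof (intro conjI allI impI)
    fix U assume a: "openin XJ U \<and> A \<subseteq> U"
    obtain a0 where "a0 \<in> A" using ne by blast
    obtain q n where a0: "a0 = (q, n)" by (cases a0)
    have "\<exists>g. (q, enat g) \<in> U"
    proof (cases n)
      case (enat m) then show ?thesis using a0 \<open>a0 \<in> A\<close> a by blast
    next
      case infinity then show ?thesis using a0 \<open>a0 \<in> A\<close> a ray by blast
    qed
    then obtain g where g: "(q, enat g) \<in> U" by blast
    define F0 where "F0 = (\<lambda>j. (j, enat (h j))) ` C"
    define F1 where "F1 = (\<lambda>p. (p, \<infinity>::enat)) ` {p. p < g \<and> (p, \<infinity>) \<in> A}"
    define F where "F = insert (q, enat g) (F0 \<union> F1)"
    have "finite F" unfolding F_def F0_def F1_def using finC by auto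
    moreover have "F \<subseteq> U"
    proof -
      have "F0 \<subseteq> A" unfolding F0_def using hin by blast
      moreover have "F1 \<subseteq> A" unfolding F1_def by blast
      ultimately show ?thesis using a g unfolding F_def by blast
    qed
    moreover have "A \<subseteq> upclosure XJ F"
      unfolding upclosure_XJ
    proof
      fix z assume "z \<in> A"
      obtain j l where z: "z = (j, l)" by (cases z)
      show "z \<in> {x. \<exists>f\<in>F. Jle f x}"
      proof (cases l)
        case (enat k)
        then have "j \<in> C" "h j \<le> k" using \<open>z \<in> A\<close> z hle C_def by auto
        then have "(j, enat (h j)) \<in> F" unfolding F_def F0_def by blast
        moreover have "Jle (j, enat (h j)) z" using z enat \<open>h j \<le> k\<close> by (simp add: Jle_iff)
        ultimately show ?thesis by blast
      next
        case infinity
        show ?thesis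
        proof (cases "j < g")
          case True
          then have "z \<in> F" using z infinity \<open>z \<in> A\<close> unfolding F_def F1_def by blast
          then show ?thesis using Jle_refl by blast
        next
          case False
          then have "Jle (q, enat g) z" using z infinity by (simp add: Jle_iff)
          then show ?thesis unfolding F_def by blast
        qed
      qed
    qed
    moreover have "upclosure XJ F \<subseteq> U"
      unfolding upclosure_XJ using \<open>F \<subseteq> U\<close> a open_upper by blast
    ultimately show "\<exists>F. finite F \<and> F \<subseteq> UNIV \<and> A \<subseteq> upclosure XJ F \<and> upclosure XJ F \<subseteq> U"
      by blast
  qed simp
  then show ?thesis using ne sat unfolding Qs_set_def by blast
qed

lemma Q_eq_Qs: "Qset XJ = Qs_set XJ"
  using Q_sub_Qs Qs_sub_Q by blast

definition Kn :: "nat \<Rightarrow> (nat \<times> enat) set" where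
  "Kn n = {x. fst x \<ge> n \<and> snd x = \<infinity>}"

lemma Kn_Qs: "Kn n \<in> Qs_set XJ"
proof -
  have "(n, \<infinity>) \<in> Kn n" unfolding Kn_def by simp
  then have ne: "Kn n \<noteq> {}" by blast
  have up: "\<forall>x\<in>Kn n. \<forall>y. Jle x y \<longrightarrow> y \<in> Kn n"
  proof (intro ballI allI impI)
    fix x y assume "x \<in> Kn n" "Jle x y"
    then have "snd x = \<infinity>" unfolding Kn_def by simp
    then obtain p where xp: "x = (p, \<infinity>)" by (cases x) simp
    have "Jle (p, \<infinity>) y" using \<open>Jle x y\<close> xp by simp
    then have "y = (p, \<infinity>)" by (rule Jle_inf_max)
    then have "y = x" using xp by simp
    then show "y \<in> Kn n" using \<open>x \<in> Kn n\<close> by simp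
  qed
  have "strongly_compact XJ (Kn n)"
    unfolding strongly_compact_def topspace_XJ
  proof (intro conjI allI impI)
    fix U assume a: "openin XJ U \<and> Kn n \<subseteq> U"
    have "(n, \<infinity>) \<in> U" using a unfolding Kn_def by auto
    then obtain g where g: "(n, enat g) \<in> U" using ray a by blast
    define F where "F = insert (n, enat g) ((\<lambda>p. (p, \<infinity>::enat)) ` {p. n \<le> p \<and> p < g})"
    have "finite F" unfolding F_def by auto
    moreover have "F \<subseteq> U"
    proof -
      have "(\<lambda>p. (p, \<infinity>::enat)) ` {p. n \<le> p \<and> p < g} \<subseteq> Kn n" by (auto simp: Kn_def)
      then show ?thesis using a g unfolding F_def by blast
    qed
    moreover have "Kn n \<subseteq> upclosure XJ F"
      unfolding upclosure_XJ
    proof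
      fix z assume "z \<in> Kn n"
      then have "snd z = \<infinity>" "fst z \<ge> n" unfolding Kn_def by simp_all
      then obtain j where z: "z = (j, \<infinity>)" "j \<ge> n" by (cases z) simp
      show "z \<in> {x. \<exists>f\<in>F. Jle f x}"
      proof (cases "j < g")
        case True
        then have "z \<in> F" using z unfolding F_def by blast
        then show ?thesis using Jle_refl by blast
      next
        case False
        then have "Jle (n, enat g) z" using z by (simp add: Jle_iff)
        then show ?thesis unfolding F_def by blast
      qed
    qed
    moreover have "upclosure XJ F \<subseteq> U"
      unfolding upclosure_XJ using \<open>F \<subseteq> U\<close> a open_upper by blast
    ultimately show "\<exists>F. finite F \<and> F \<subseteq> UNIV \<and> Kn n \<subseteq> upclosure XJ F \<and> upclosure XJ F \<subseteq> U"
      by blast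
  qed simp
  then show ?thesis using ne up saturated_iff unfolding Qs_set_def by blast
qed

lemma Kn_filtered: "filtered_family (range Kn)"
  unfolding filtered_family_def
proof (intro conjI ballI)
  fix A B assume "A \<in> range Kn" "B \<in> range Kn"
  then obtain a b where "A = Kn a" "B = Kn b" by blast
  then have "Kn (max a b) \<subseteq> A \<inter> B" by (auto simp: Kn_def)
  then show "\<exists>C\<in>range Kn. C \<subseteq> A \<inter> B" by blast
qed simp

lemma Kn_inter: "\<Inter>(range Kn) = {}"
proof -
  have "x \<notin> Kn (Suc (fst x))" for x unfolding Kn_def by simp
  then have "x \<notin> \<Inter>(range Kn)" for x by (meson INT_E UNIV_I)
  then show ?thesis by auto
qed

lemma open_empty: "openin XJ {}" by (rule openin_empty)

lemma Kn_not_empty: "\<not> Kn n \<subseteq> {}"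
proof -
  have "(n, \<infinity>) \<in> Kn n" unfolding Kn_def by simp
  then show ?thesis by blast
qed

lemma not_swf: "\<not> s_well_filtered XJ"
  unfolding s_well_filtered_def
proof
  assume h: "\<forall>U K. openin XJ U \<and> K \<subseteq> Qs_set XJ \<and> filtered_family K \<and> \<Inter>K \<subseteq> U \<longrightarrow> (\<exists>A\<in>K. A \<subseteq> U)"
  have "range Kn \<subseteq> Qs_set XJ" using Kn_Qs by blast
  then have "\<exists>A\<in>range Kn. A \<subseteq> {}"
    using h[rule_format, of "{}" "range Kn"] Kn_filtered Kn_inter open_empty by simp
  then show False using Kn_not_empty by blast
qed

lemma not_wf: "\<not> well_filtered XJ"
  unfolding well_filtered_def
proof
  assume h: "\<forall>U K. openin XJ U \<and> K \<subseteq> Qset XJ \<and> filtered_family K \<and> \<Inter>K \<subseteq> U \<longrightarrow> (\<exists>A\<in>K. A \<subseteq> U)"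
  have "range Kn \<subseteq> Qset XJ" using Kn_Qs Qs_sub_Q by blast
  then have "\<exists>A\<in>range Kn. A \<subseteq> {}"
    using h[rule_format, of "{}" "range Kn"] Kn_filtered Kn_inter open_empty by simp
  then show False using Kn_not_empty by blast
qed

theorem mainTheorem3:
  shows "d_space (scott_topology UNIV Jle) \<and>
         Qset (scott_topology UNIV Jle) = Qs_set (scott_topology UNIV Jle) \<and>
         \<not> well_filtered (scott_topology UNIV Jle) \<and>
         \<not> s_well_filtered (scott_topology UNIV Jle)"
  using dspace_XJ Q_eq_Qs not_wf not_swf by blast

end
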